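(* Let $P,Q$ be finite posets, $R$ an indecomposable commutative unital ring, $\Phi:I^3(P,R)\to I^3(Q,R)$ an $R$-linear algebra isomorphism, and $\varphi:P\to Q$ the bijection such that $\Phi(e_x)-e_{\varphi(x)}\in J^3_1(Q,R)$ for all $x\in P$ (such a bijection exists and is unique). Then for all $x<y$ in $P$ with $l(x,y)=1$ we have $\varphi(x)<\varphi(y)$ and $$\Phi(e_{xxy}+e_{xyy})=e_{\varphi(x)\varphi(x)\varphi(y)}+e_{\varphi(x)\varphi(y)\varphi(y)}+\sigma_{xy}$$ for some $\sigma_{xy}\in J^3_2(Q,R)$.
   Context: A commutative ring is indecomposable if its only idempotents are $0$ and $1$. For a finite poset $P$, $P^3_\le=\{(x,y,z)\in P^3: x\le y\le z\}$, and $I^3(P,R)$ is the $R$-module of functions $f:P^3_\le\to R$ with multiplication $(fg)(x_1,x_2,x_3)=\sum f(x_1,y_1,y_2)g(y_1,y_2,x_3)$ over all $x_1\le y_1\le x_2\le y_2\le x_3$. For $x\le y\le z$, $e_{xyz}$ is the function equal to $1$ at $(x,y,z)$ and $0$ elsewhere, and $e_x:=e_{xxx}$. For $a\le b$, $l(a,b)$ is the maximum of $|C|-1$ over chains $C$ in the interval $[a,b]$. $J^3_k(Q,R)=\{f\in I^3(Q,R): f(x_1,x_2,x_3)=0 \text{ whenever } l(x_1,x_3)<k\}$. *)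

theory Defs
  imports Main
begin

definition indecomposable_ring :: "'r::comm_ring_1 itself \<Rightarrow> bool" where
  "indecomposable_ring _ \<longleftrightarrow> (\<forall>e::'r. e * e = e \<longrightarrow> e = 0 \<or> e = 1)"

definition I3 :: "('p::order \<times> 'p \<times> 'p \<Rightarrow> 'r::comm_ring_1) set" where
  "I3 = {f. \<forall>x y z. \<not> (x \<le> y \<and> y \<le> z) \<longrightarrow> f (x, y, z) = 0}"

definition mult3 :: "('p::{order,finite} \<times> 'p \<times> 'p \<Rightarrow> 'r::comm_ring_1)
    \<Rightarrow> ('p \<times> 'p \<times> 'p \<Rightarrow> 'r) \<Rightarrow> ('p \<times> 'p \<times> 'p \<Rightarrow> 'r)" where
  "mult3 f g = (\<lambda>(x1, x2, x3).
     if x1 \<le> x2 \<and> x2 \<le> x3 then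
       (\<Sum>(y1, y2)\<in>{(y1, y2). x1 \<le> y1 \<and> y1 \<le> x2 \<and> x2 \<le> y2 \<and> y2 \<le> x3}.
          f (x1, y1, y2) * g (y1, y2, x3))
     else 0)"

definition e3 :: "'p \<Rightarrow> 'p \<Rightarrow> 'p \<Rightarrow> ('p \<times> 'p \<times> 'p \<Rightarrow> 'r::comm_ring_1)" where
  "e3 x y z = (\<lambda>t. if t = (x, y, z) then 1 else 0)"

definition len :: "'p::{order,finite} \<Rightarrow> 'p \<Rightarrow> nat" where
  "len a b = Max {card C - 1 | C. C \<subseteq> {a..b} \<and> Complete_Partial_Order.chain (\<le>) C}"

definition J3 :: "nat \<Rightarrow> ('p::{order,finite} \<times> 'p \<times> 'p \<Rightarrow> 'r::comm_ring_1) set" where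
  "J3 k = {f \<in> I3. \<forall>x1 x2 x3. x1 \<le> x2 \<and> x2 \<le> x3 \<and> len x1 x3 < k \<longrightarrow> f (x1, x2, x3) = 0}"

definition alg_iso3 :: "(('p::{order,finite} \<times> 'p \<times> 'p \<Rightarrow> 'r::comm_ring_1)
    \<Rightarrow> ('q::{order,finite} \<times> 'q \<times> 'q \<Rightarrow> 'r)) \<Rightarrow> bool" where
  "alg_iso3 \<Phi> \<longleftrightarrow> bij_betw \<Phi> I3 I3
     \<and> (\<forall>f\<in>I3. \<forall>g\<in>I3. \<Phi> (\<lambda>t. f t + g t) = (\<lambda>t. \<Phi> f t + \<Phi> g t))
     \<and> (\<forall>f\<in>I3. \<forall>c. \<Phi> (\<lambda>t. c * f t) = (\<lambda>t. c * \<Phi> f t))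
     \<and> (\<forall>f\<in>I3. \<forall>g\<in>I3. \<Phi> (mult3 f g) = mult3 (\<Phi> f) (\<Phi> g))"

end

theory Submission
  imports Defs
begin


lemma mult3_in_I3: "mult3 f g \<in> I3"
  unfolding I3_def mult3_def by auto

lemma e3_in_I3: "x \<le> y \<Longrightarrow> y \<le> z \<Longrightarrow> e3 x y z \<in> I3"
  unfolding I3_def e3_def by auto

lemma I3_D: "f \<in> I3 \<Longrightarrow> \<not> (x \<le> y \<and> y \<le> z) \<Longrightarrow> f (x,y,z) = 0"
  unfolding I3_def by auto

lemma if1mult: "(if P then 1 else 0) * (k::'a::comm_ring_1) = (if P then k else 0)" by simp
lemma multif1: "(k::'a::comm_ring_1) * (if P then 1 else 0) = (if P then k else 0)" by simp

lemma mult3_e3_left: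
  fixes k :: "'p::{order,finite} \<times> 'p \<times> 'p \<Rightarrow> 'r::comm_ring_1"
  shows "mult3 (e3 a b c) k (x1,x2,x3) = (if x1 = a \<and> a \<le> b \<and> b \<le> x2 \<and> x2 \<le> c \<and> c \<le> x3 then k(b,c,x3) else 0)"
proof -
  let ?S = "{(y1, y2). x1 \<le> y1 \<and> y1 \<le> x2 \<and> x2 \<le> y2 \<and> y2 \<le> x3}"
  have "(\<Sum>(y1, y2)\<in>?S. e3 a b c (x1, y1, y2) * k (y1, y2, x3))
      = (\<Sum>yy\<in>?S. if yy = (b,c) then e3 a b c (x1, b, c) * k (b, c, x3) else 0)"
  proof (rule sum.cong[OF refl])
    fix yy :: "'p \<times> 'p"
    obtain y1 y2 where yy: "yy = (y1,y2)" by (cases yy)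
    show "(case yy of (y1, y2) \<Rightarrow> e3 a b c (x1, y1, y2) * k (y1, y2, x3)) =
         (if yy = (b,c) then e3 a b c (x1, b, c) * k (b, c, x3) else 0)"
      proof (cases "(y1,y2) = (b,c)")
        case False
        hence z: "e3 a b c (x1, y1, y2) = 0" by (auto simp: e3_def)
        show ?thesis unfolding yy by (subst if_not_P[OF False]) (simp only: case_prod_conv z mult_zero_left)
      qed (simp add: yy)
  qed
  also have "\<dots> = (if (b,c) \<in> ?S then e3 a b c (x1, b, c) * k (b, c, x3) else 0)"
    by (rule sum.delta) simp
  finally have sm: "(\<Sum>(y1, y2)\<in>?S. e3 a b c (x1, y1, y2) * k (y1, y2, x3)) = (if (b,c) \<in> ?S then e3 a b c (x1, b, c) * k (b, c, x3) else 0)" .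
  have e: "e3 a b c (x1,b,c) = (if x1 = a then 1 else 0)" by (simp add: e3_def)
  have m: "mult3 (e3 a b c) k (x1,x2,x3) = (if x1 \<le> x2 \<and> x2 \<le> x3 then (\<Sum>(y1, y2)\<in>?S. e3 a b c (x1, y1, y2) * k (y1, y2, x3)) else 0)"
    unfolding mult3_def by simp
  show ?thesis
  proof (cases "x1 = a \<and> a \<le> b \<and> b \<le> x2 \<and> x2 \<le> c \<and> c \<le> x3")
    case True
    hence "x1 \<le> x2" "x2 \<le> x3" using order_trans by blast+
    with True show ?thesis unfolding m sm e by simp
  next
    case False
    thus ?thesis unfolding m sm e by auto
  qed
qed

lemma mult3_e3_right:
  fixes k :: "'p::{order,finite} \<times> 'p \<times> 'p \<Rightarrow> 'r::comm_ring_1"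
  shows "mult3 k (e3 a b c) (x1,x2,x3) = (if x3 = c \<and> x1 \<le> a \<and> a \<le> x2 \<and> x2 \<le> b \<and> b \<le> c then k(x1,a,b) else 0)"
proof -
  let ?S = "{(y1, y2). x1 \<le> y1 \<and> y1 \<le> x2 \<and> x2 \<le> y2 \<and> y2 \<le> x3}"
  have "(\<Sum>(y1, y2)\<in>?S. k (x1, y1, y2) * e3 a b c (y1, y2, x3))
      = (\<Sum>yy\<in>?S. if yy = (a,b) then k (x1, a, b) * e3 a b c (a, b, x3) else 0)"
  proof (rule sum.cong[OF refl])
    fix yy :: "'p \<times> 'p"
    obtain y1 y2 where yy: "yy = (y1,y2)" by (cases yy)
    show "(case yy of (y1, y2) \<Rightarrow> k (x1, y1, y2) * e3 a b c (y1, y2, x3)) =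
         (if yy = (a,b) then k (x1, a, b) * e3 a b c (a, b, x3) else 0)"
      proof (cases "(y1,y2) = (a,b)")
        case False
        hence z: "e3 a b c (y1, y2, x3) = 0" by (auto simp: e3_def)
        show ?thesis unfolding yy by (subst if_not_P[OF False]) (simp only: case_prod_conv z mult_zero_right)
      qed (simp add: yy)
  qed
  also have "\<dots> = (if (a,b) \<in> ?S then k (x1, a, b) * e3 a b c (a, b, x3) else 0)"
    by (rule sum.delta) simp
  finally have sm: "(\<Sum>(y1, y2)\<in>?S. k (x1, y1, y2) * e3 a b c (y1, y2, x3)) = (if (a,b) \<in> ?S then k (x1, a, b) * e3 a b c (a, b, x3) else 0)" .
  have e: "e3 a b c (a,b,x3) = (if x3 = c then 1 else 0)" by (simp add: e3_def)
  have m: "mult3 k (e3 a b c) (x1,x2,x3) = (if x1 \<le> x2 \<and> x2 \<le> x3 then (\<Sum>(y1, y2)\<in>?S. k (x1, y1, y2) * e3 a b c (y1, y2, x3)) else 0)"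
    unfolding mult3_def by simp
  show ?thesis
  proof (cases "x3 = c \<and> x1 \<le> a \<and> a \<le> x2 \<and> x2 \<le> b \<and> b \<le> c")
    case True
    hence "x1 \<le> x2" "x2 \<le> x3" using order_trans by blast+
    with True show ?thesis unfolding m sm e by simp
  next
    case False
    thus ?thesis unfolding m sm e by auto
  qed
qed

lemma mult3_diag:
  fixes F :: "'p::{order,finite} \<times> 'p \<times> 'p \<Rightarrow> 'r::comm_ring_1"
  shows "mult3 F G (a,a,a) = F(a,a,a) * G(a,a,a)"
proof -
  have "{(y1, y2). a \<le> y1 \<and> y1 \<le> a \<and> a \<le> y2 \<and> y2 \<le> a} = {(a,a)}"
    by (auto intro: order.antisym)
  thus ?thesis unfolding mult3_def by simp
qed

lemma mult3_l:
  fixes F :: "'p::{order,finite} \<times> 'p \<times> 'p \<Rightarrow> 'r::comm_ring_1"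
  assumes "a < b" "\<forall>t. a \<le> t \<and> t \<le> b \<longrightarrow> t = a \<or> t = b"
  shows "mult3 F G (a,a,b) = F(a,a,a) * G(a,a,b) + F(a,a,b) * G(a,b,b)"
proof -
  have "{(y1, y2). a \<le> y1 \<and> y1 \<le> a \<and> a \<le> y2 \<and> y2 \<le> b} = {(a,a),(a,b)}"
    using assms by (auto intro: order.antisym)
  thus ?thesis using assms(1) unfolding mult3_def by (simp add: order.strict_implies_order)
qed

lemma mult3_r:
  fixes F :: "'p::{order,finite} \<times> 'p \<times> 'p \<Rightarrow> 'r::comm_ring_1"
  assumes "a < b" "\<forall>t. a \<le> t \<and> t \<le> b \<longrightarrow> t = a \<or> t = b"
  shows "mult3 F G (a,b,b) = F(a,a,b) * G(a,b,b) + F(a,b,b) * G(b,b,b)"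
proof -
  have "{(y1, y2). a \<le> y1 \<and> y1 \<le> b \<and> b \<le> y2 \<and> y2 \<le> b} = {(a,b),(b,b)}"
    using assms by (auto intro: order.antisym)
  thus ?thesis using assms(1) unfolding mult3_def by (simp add: add.commute order.strict_implies_order)
qed



lemma fun3_eqI:
  assumes "\<And>x1 x2 x3. f (x1,x2,x3) = g (x1,x2,x3)"
  shows "f = g"
proof (rule ext)
  fix t show "f t = g t" using assms by (cases t) auto
qed

lemma chain2: "(a::'a::order) \<le> b \<Longrightarrow> Complete_Partial_Order.chain (\<le>) {a,b}"
  unfolding chain_def by auto

lemma chain3: "(a::'a::order) \<le> b \<Longrightarrow> b \<le> c \<Longrightarrow> Complete_Partial_Order.chain (\<le>) {a,b,c}"
  using order_trans[of a b c] unfolding chain_def by auto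

lemma len_set_finite: "finite {card C - 1 | C. C \<subseteq> {a..b::'p::{order,finite}} \<and> Complete_Partial_Order.chain (\<le>) C}"
  by (rule finite_image_set) simp

lemma len_ge:
  fixes a b :: "'p::{order,finite}"
  assumes "C \<subseteq> {a..b}" "Complete_Partial_Order.chain (\<le>) C"
  shows "card C - 1 \<le> len a b"
  unfolding len_def by (rule Max_ge[OF len_set_finite]) (use assms in blast)

lemma len_ge1: "(a::'p::{order,finite}) < b \<Longrightarrow> 1 \<le> len a b"
  using len_ge[of "{a,b}" a b] chain2[of a b] by auto

lemma len_ge2: assumes "(a::'p::{order,finite}) < z" "z < c" shows "2 \<le> len a c"
proof -
  have "a < c" using assms by (rule less_trans)
  hence "a \<noteq> z" "a \<noteq> c" "z \<noteq> c" using assms by auto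
  hence "card {a,z,c} = 3" by simp
  moreover have "{a,z,c} \<subseteq> {a..c}" using assms by auto
  ultimately show ?thesis using len_ge[of "{a,z,c}" a c] chain3[of a z c] assms by auto
qed

lemma len_obtain:
  fixes a b :: "'p::{order,finite}"
  obtains C where "C \<subseteq> {a..b}" "Complete_Partial_Order.chain (\<le>) C" "len a b = card C - 1"
proof -
  have "len a b \<in> {card C - 1 | C. C \<subseteq> {a..b} \<and> Complete_Partial_Order.chain (\<le>) C}"
    unfolding len_def by (rule Max_in[OF len_set_finite]) (auto intro!: exI[of _ "{}"] simp: chain_empty)
  thus ?thesis using that by blast
qed

lemma len_refl: "len (a::'p::{order,finite}) a = 0"
proof -
  obtain C where C: "C \<subseteq> {a..a}" "len a a = card C - 1" by (rule len_obtain)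
  have "C \<subseteq> {a}" using C(1) by auto
  hence "card C \<le> 1" using card_mono[of "{a}" C] by simp
  thus ?thesis using C by simp
qed

lemma len_between:
  fixes a c :: "'p::{order,finite}"
  assumes "2 \<le> len a c" shows "\<exists>z. a < z \<and> z < c"
proof -
  obtain C where C: "C \<subseteq> {a..c}" "len a c = card C - 1" by (rule len_obtain)
  have "3 \<le> card C" using C assms by simp
  have "C \<subseteq> (C - {a,c}) \<union> {a,c}" by auto
  hence "card C \<le> card ((C - {a,c}) \<union> {a,c})" by (rule card_mono[rotated]) simp
  also have "\<dots> \<le> card (C - {a,c}) + card {a,c}" by (rule card_Un_le)
  finally have "card C \<le> card (C - {a,c}) + card {a,c}" .
  moreover have "card {a,c} \<le> 2" by (simp add: card_insert_le_m1)
  ultimately have "card C \<le> card (C - {a,c}) + 2" by linarith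
  hence "card (C - {a,c}) \<noteq> 0" using \<open>3 \<le> card C\<close> by linarith
  hence "C - {a,c} \<noteq> {}" by (metis card.empty)
  then obtain z where "z \<in> C" "z \<noteq> a" "z \<noteq> c" by auto
  moreover have "a \<le> z" "z \<le> c" using C(1) \<open>z \<in> C\<close> by auto
  ultimately show ?thesis by (auto simp: order.strict_iff_order)
qed

lemma len_mono:
  fixes a b :: "'p::{order,finite}"
  assumes "a \<le> a'" "b' \<le> b" shows "len a' b' \<le> len a b"
proof -
  obtain C where C: "C \<subseteq> {a'..b'}" "Complete_Partial_Order.chain (\<le>) C" "len a' b' = card C - 1" by (rule len_obtain)
  have "C \<subseteq> {a..b}"
  proof
    fix t assume "t \<in> C"
    hence "a' \<le> t" "t \<le> b'" using C(1) by auto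
    thus "t \<in> {a..b}" using assms order_trans[of a a' t] order_trans[of t b' b] by auto
  qed
  thus ?thesis using len_ge[of C a b] C by simp
qed



definition cov :: "'p::order \<Rightarrow> 'p \<Rightarrow> bool" where
  "cov a b \<longleftrightarrow> a < b \<and> (\<forall>t. a \<le> t \<and> t \<le> b \<longrightarrow> t = a \<or> t = b)"

lemma J3_1_iff: "h \<in> J3 1 \<longleftrightarrow> h \<in> I3 \<and> (\<forall>a. h (a,a,a) = 0)"
proof
  assume h: "h \<in> J3 1"
  thus "h \<in> I3 \<and> (\<forall>a. h (a,a,a) = 0)" unfolding J3_def by (auto simp: len_refl)
next
  assume h: "h \<in> I3 \<and> (\<forall>a. h (a,a,a) = 0)"
  { fix x1 x2 x3 :: 'a assume "x1 \<le> x2" "x2 \<le> x3" "len x1 x3 < 1"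
    moreover have "x1 \<le> x3" using \<open>x1 \<le> x2\<close> \<open>x2 \<le> x3\<close> by (rule order_trans)
    ultimately have "x1 = x3" using len_ge1[of x1 x3] by (auto simp: order.strict_iff_order)
    hence "x1 = x2" "x2 = x3" using \<open>x1 \<le> x2\<close> \<open>x2 \<le> x3\<close> by auto
    hence "h (x1,x2,x3) = 0" using h by auto }
  thus "h \<in> J3 1" using h unfolding J3_def by auto
qed

lemma J3_2_iff: "h \<in> J3 2 \<longleftrightarrow> h \<in> I3 \<and> (\<forall>a. h (a,a,a) = 0) \<and> (\<forall>a b. cov a b \<longrightarrow> h (a,a,b) = 0 \<and> h (a,b,b) = 0)"
proof
  assume h: "h \<in> J3 2"
  { fix a b :: 'a assume "cov a b"
    hence "len a b < 2" using len_between[of a b] unfolding cov_def by (auto simp: not_le[symmetric] dest: order.strict_implies_order)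
    hence "h (a,a,b) = 0 \<and> h (a,b,b) = 0" using h \<open>cov a b\<close> unfolding J3_def cov_def by auto }
  thus "h \<in> I3 \<and> (\<forall>a. h (a,a,a) = 0) \<and> (\<forall>a b. cov a b \<longrightarrow> h (a,a,b) = 0 \<and> h (a,b,b) = 0)"
    using h unfolding J3_def by (auto simp: len_refl)
next
  assume h: "h \<in> I3 \<and> (\<forall>a. h (a,a,a) = 0) \<and> (\<forall>a b. cov a b \<longrightarrow> h (a,a,b) = 0 \<and> h (a,b,b) = 0)"
  { fix x1 x2 x3 :: 'a assume le: "x1 \<le> x2" "x2 \<le> x3" and l: "len x1 x3 < 2"
    have "h (x1,x2,x3) = 0"
    proof (cases "x1 = x3")
      case True
      hence "x1 = x2" "x2 = x3" using le by auto
      thus ?thesis using h by auto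
    next
      case False
      moreover have "x1 \<le> x3" using le by (rule order_trans)
      ultimately have "x1 < x3" by (auto simp: order.strict_iff_order)
      have c: "cov x1 x3" unfolding cov_def
      proof (intro conjI allI impI)
        fix t assume "x1 \<le> t \<and> t \<le> x3"
        thus "t = x1 \<or> t = x3" using len_ge2[of x1 t x3] l by (auto simp: order.strict_iff_order)
      qed fact
      hence "x2 = x1 \<or> x2 = x3" using le unfolding cov_def by auto
      thus ?thesis using h c by auto
    qed }
  thus "h \<in> J3 2" using h unfolding J3_def by auto
qed

lemma cov_len: "cov a b \<Longrightarrow> len a b = 1"
proof -
  assume c: "cov a b"
  hence "1 \<le> len a b" using len_ge1 unfolding cov_def by auto
  moreover have "\<not> 2 \<le> len a b"
  proof
    assume "2 \<le> len a b"
    then obtain z where "a < z" "z < b" using len_between[of a b] by auto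
    thus False using c unfolding cov_def by (auto simp: order.strict_iff_order)
  qed
  ultimately show ?thesis by simp
qed

lemma len1_cov: "a < b \<Longrightarrow> len a b = 1 \<Longrightarrow> cov a b"
  unfolding cov_def using len_ge2 by (fastforce simp: order.strict_iff_order)

lemma J3_ideal_left:
  fixes Y X :: "'p::{order,finite} \<times> 'p \<times> 'p \<Rightarrow> 'r::comm_ring_1"
  assumes Y: "Y \<in> J3 k" shows "mult3 X Y \<in> J3 k"
proof -
  { fix x1 x2 x3 :: 'p assume le: "x1 \<le> x2" "x2 \<le> x3" and l: "len x1 x3 < k"
    have "mult3 X Y (x1,x2,x3) = 0" unfolding mult3_def
    proof (simp, intro impI sum.neutral ballI)
      fix yy assume "yy \<in> {(y1, y2). x1 \<le> y1 \<and> y1 \<le> x2 \<and> x2 \<le> y2 \<and> y2 \<le> x3}"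
      then obtain y1 y2 where yy: "yy = (y1,y2)" "x1 \<le> y1" "y1 \<le> x2" "x2 \<le> y2" "y2 \<le> x3" by auto
      have "len y1 x3 \<le> len x1 x3" by (rule len_mono) (use yy in auto)
      moreover have "y1 \<le> y2" using yy(3,4) by (rule order_trans)
      ultimately have "Y (y1,y2,x3) = 0" using Y l yy unfolding J3_def by auto
      thus "(case yy of (y1, y2) \<Rightarrow> X (x1, y1, y2) * Y (y1, y2, x3)) = 0" using yy by simp
    qed }
  thus ?thesis unfolding J3_def using mult3_in_I3 by blast
qed

lemma J3_ideal_right:
  fixes Y X :: "'p::{order,finite} \<times> 'p \<times> 'p \<Rightarrow> 'r::comm_ring_1"
  assumes Y: "Y \<in> J3 k" shows "mult3 Y X \<in> J3 k"
proof -
  { fix x1 x2 x3 :: 'p assume le: "x1 \<le> x2" "x2 \<le> x3" and l: "len x1 x3 < k"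
    have "mult3 Y X (x1,x2,x3) = 0" unfolding mult3_def
    proof (simp, intro impI sum.neutral ballI)
      fix yy assume "yy \<in> {(y1, y2). x1 \<le> y1 \<and> y1 \<le> x2 \<and> x2 \<le> y2 \<and> y2 \<le> x3}"
      then obtain y1 y2 where yy: "yy = (y1,y2)" "x1 \<le> y1" "y1 \<le> x2" "x2 \<le> y2" "y2 \<le> x3" by auto
      have "len x1 y2 \<le> len x1 x3" by (rule len_mono) (use yy in auto)
      moreover have "y1 \<le> y2" using yy(3,4) by (rule order_trans)
      ultimately have "Y (x1,y1,y2) = 0" using Y l yy unfolding J3_def by auto
      thus "(case yy of (y1, y2) \<Rightarrow> Y (x1, y1, y2) * X (y1, y2, x3)) = 0" using yy by simp
    qed }
  thus ?thesis unfolding J3_def using mult3_in_I3 by blast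
qed



lemma cov_btw: "cov a b \<Longrightarrow> \<forall>t. a \<le> t \<and> t \<le> b \<longrightarrow> t = a \<or> t = b"
  unfolding cov_def by auto
lemma cov_lt: "cov a b \<Longrightarrow> a < b"
  unfolding cov_def by auto

lemma cov_l: "cov a b \<Longrightarrow> mult3 F G (a,a,b) = F(a,a,a) * G(a,a,b) + F(a,a,b) * G(a,b,b)"
  by (rule mult3_l[OF cov_lt cov_btw])
lemma cov_r: "cov a b \<Longrightarrow> mult3 F G (a,b,b) = F(a,a,b) * G(a,b,b) + F(a,b,b) * G(b,b,b)"
  by (rule mult3_r[OF cov_lt cov_btw])

lemma CovL:
  fixes K E :: "'q::{order,finite} \<times> 'q \<times> 'q \<Rightarrow> 'r::comm_ring_1"
  assumes c: "cov a b" and "K (b,b,b) = 0" "E (a,a,a) = 1"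
    and "mult3 E K (a,a,b) = 0" "mult3 E K (a,b,b) = 0"
  shows "K (a,a,b) = 0"
  using assms cov_l[OF c, of E K] cov_r[OF c, of E K] by (simp add: algebra_simps)

lemma CovR:
  fixes K E :: "'q::{order,finite} \<times> 'q \<times> 'q \<Rightarrow> 'r::comm_ring_1"
  assumes c: "cov a b" and "K (a,a,a) = 0" "E (b,b,b) = 1"
    and "mult3 K E (a,a,b) = 0" "mult3 K E (a,b,b) = 0"
  shows "K (a,b,b) = 0"
  using assms cov_l[OF c, of K E] cov_r[OF c, of K E] by (simp add: algebra_simps)

lemma I3_add: "f \<in> I3 \<Longrightarrow> g \<in> I3 \<Longrightarrow> (\<lambda>t. f t + g t) \<in> I3"
  unfolding I3_def by auto
lemma I3_smul: "f \<in> I3 \<Longrightarrow> (\<lambda>t. c * f t) \<in> I3"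
  unfolding I3_def by auto
lemma I3_diff: "f \<in> I3 \<Longrightarrow> g \<in> I3 \<Longrightarrow> (\<lambda>t. f t - g t) \<in> I3"
  unfolding I3_def by auto
lemma I3_zero: "(\<lambda>t. 0) \<in> I3"
  unfolding I3_def by auto

lemma J3_add: "f \<in> J3 k \<Longrightarrow> g \<in> J3 k \<Longrightarrow> (\<lambda>t. f t + g t) \<in> J3 k"
  unfolding J3_def I3_def by auto
lemma J3_smul: "f \<in> J3 k \<Longrightarrow> (\<lambda>t. c * f t) \<in> J3 k"
  unfolding J3_def I3_def by auto
lemma J3_zero: "(\<lambda>t. 0) \<in> J3 k"
  unfolding J3_def I3_def by auto

lemma e3_eq: "e3 a b c (x1,x2,x3) = (if x1 = a \<and> x2 = b \<and> x3 = c then 1 else 0)"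
  unfolding e3_def by auto

lemmas m3simps = mult3_e3_left mult3_e3_right e3_eq

lemma ee_same: "mult3 (e3 x x x) (e3 x x x) = (e3 (x::'p::{order,finite}) x x :: _ \<Rightarrow> 'r::comm_ring_1)"
  by (rule fun3_eqI) (auto simp: m3simps)

lemma ee_diff: "x \<noteq> z \<Longrightarrow> mult3 (e3 x x x) (e3 z z z) = (\<lambda>t. 0 :: 'r::comm_ring_1)" for x z :: "'p::{order,finite}"
  by (rule fun3_eqI) (auto simp: m3simps)

lemma exe: "mult3 (mult3 (e3 z z z) h) (e3 z z z) = (\<lambda>t. h(z,z,z) * e3 z z z t)"
  for z :: "'p::{order,finite}" and h :: "_ \<Rightarrow> 'r::comm_ring_1"
  by (rule fun3_eqI) (auto simp: m3simps)

lemma e_mid_left: "a \<noteq> b \<Longrightarrow> mult3 (e3 z z z) (e3 a b c) = (\<lambda>t. 0 :: 'r::comm_ring_1)" for a b c z :: "'p::{order,finite}"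
  by (rule fun3_eqI) (auto simp: m3simps)
lemma e_mid_right: "b \<noteq> c \<Longrightarrow> mult3 (e3 a b c) (e3 z z z) = (\<lambda>t. 0 :: 'r::comm_ring_1)" for a b c z :: "'p::{order,finite}"
  by (rule fun3_eqI) (auto simp: m3simps)

lemma e_aac: "a < z \<Longrightarrow> z < c \<Longrightarrow> mult3 (e3 a a a) (mult3 (e3 a a z) (e3 a z c)) = (e3 a a c :: _ \<Rightarrow> 'r::comm_ring_1)" for a c z :: "'p::{order,finite}"
  by (rule fun3_eqI) (auto simp: m3simps)
lemma e_acc: "a < z \<Longrightarrow> z < c \<Longrightarrow> mult3 (mult3 (e3 a z c) (e3 z c c)) (e3 c c c) = (e3 a c c :: _ \<Rightarrow> 'r::comm_ring_1)" for a c z :: "'p::{order,finite}"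
  by (rule fun3_eqI) (auto simp: m3simps)



locale iso3 =
  fixes \<Phi> :: "('p::{order,finite} \<times> 'p \<times> 'p \<Rightarrow> 'r::comm_ring_1) \<Rightarrow> ('q::{order,finite} \<times> 'q \<times> 'q \<Rightarrow> 'r)"
    and \<phi> :: "'p \<Rightarrow> 'q"
  assumes iso: "alg_iso3 \<Phi>" and bij: "bij \<phi>"
    and H: "\<forall>x. (\<lambda>t. \<Phi> (e3 x x x) t - e3 (\<phi> x) (\<phi> x) (\<phi> x) t) \<in> J3 1"
begin

lemma phi_inv: "\<phi> (inv \<phi> a) = a"
  using bij by (simp add: bij_is_surj surj_f_inv_f)

lemma add: "f \<in> I3 \<Longrightarrow> g \<in> I3 \<Longrightarrow> \<Phi> (\<lambda>t. f t + g t) = (\<lambda>t. \<Phi> f t + \<Phi> g t)"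
  using iso unfolding alg_iso3_def by blast
lemma smul: "f \<in> I3 \<Longrightarrow> \<Phi> (\<lambda>t. c * f t) = (\<lambda>t. c * \<Phi> f t)"
  using iso unfolding alg_iso3_def by blast
lemma mul: "f \<in> I3 \<Longrightarrow> g \<in> I3 \<Longrightarrow> \<Phi> (mult3 f g) = mult3 (\<Phi> f) (\<Phi> g)"
  using iso unfolding alg_iso3_def by blast
lemma PhiI3: "f \<in> I3 \<Longrightarrow> \<Phi> f \<in> I3"
  using iso unfolding alg_iso3_def bij_betw_def by blast
lemma zero: "\<Phi> (\<lambda>t. 0) = (\<lambda>t. 0)"
  using smul[OF I3_zero, of 0] by simp
lemma diff: "f \<in> I3 \<Longrightarrow> g \<in> I3 \<Longrightarrow> \<Phi> (\<lambda>t. f t - g t) = (\<lambda>t. \<Phi> f t - \<Phi> g t)"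
proof -
  assume f: "f \<in> I3" and g: "g \<in> I3"
  have e1: "\<Phi> (\<lambda>t. f t + -1 * g t) = (\<lambda>t. \<Phi> f t + \<Phi> (\<lambda>t. -1 * g t) t)" by (rule add[OF f I3_smul[OF g]])
  have e2: "\<Phi> (\<lambda>t. -1 * g t) = (\<lambda>t. -1 * \<Phi> g t)" by (rule smul[OF g])
  have e0: "(\<lambda>t. f t - g t) = (\<lambda>t. f t + -1 * g t)" by simp
  show ?thesis unfolding e0 e1 e2 by simp
qed

lemma E_diag: "\<Phi> (e3 x x x) (a,a,a) = (if a = \<phi> x then 1 else 0)"
proof -
  have h: "(\<lambda>t. \<Phi> (e3 x x x) t - e3 (\<phi> x) (\<phi> x) (\<phi> x) t) \<in> J3 1" using H by (rule spec)
  have "\<forall>a. (\<lambda>t. \<Phi> (e3 x x x) t - e3 (\<phi> x) (\<phi> x) (\<phi> x) t) (a,a,a) = 0"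
    using h unfolding J3_1_iff by (rule conjunct2)
  hence "(\<lambda>t. \<Phi> (e3 x x x) t - e3 (\<phi> x) (\<phi> x) (\<phi> x) t) (a,a,a) = 0" by (rule spec)
  thus ?thesis by (auto simp: e3_eq)
qed

lemma diag: "h \<in> I3 \<Longrightarrow> \<Phi> h (\<phi> z, \<phi> z, \<phi> z) = h (z,z,z)"
proof -
  assume h: "h \<in> I3"
  have ez: "e3 z z z \<in> I3" by (rule e3_in_I3) auto
  have "\<Phi> (mult3 (mult3 (e3 z z z) h) (e3 z z z)) = \<Phi> (\<lambda>t. h(z,z,z) * e3 z z z t)"
    by (simp add: exe)
  hence "mult3 (mult3 (\<Phi> (e3 z z z)) (\<Phi> h)) (\<Phi> (e3 z z z)) = (\<lambda>t. h(z,z,z) * \<Phi> (e3 z z z) t)"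
    using mul[OF mult3_in_I3 ez] mul[OF ez h] smul[OF ez] by simp
  hence "mult3 (mult3 (\<Phi> (e3 z z z)) (\<Phi> h)) (\<Phi> (e3 z z z)) (\<phi> z, \<phi> z, \<phi> z) = h(z,z,z) * \<Phi> (e3 z z z) (\<phi> z, \<phi> z, \<phi> z)"
    by simp
  thus ?thesis by (simp add: mult3_diag E_diag)
qed

lemma J1: "h \<in> I3 \<Longrightarrow> \<Phi> h \<in> J3 1 \<longleftrightarrow> h \<in> J3 1"
proof -
  assume h: "h \<in> I3"
  have "(\<forall>a. \<Phi> h (a,a,a) = 0) \<longleftrightarrow> (\<forall>z. h (z,z,z) = 0)"
  proof
    assume "\<forall>a. \<Phi> h (a,a,a) = 0" thus "\<forall>z. h (z,z,z) = 0" using diag[OF h] by metis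
  next
    assume z: "\<forall>z. h (z,z,z) = 0"
    show "\<forall>a. \<Phi> h (a,a,a) = 0"
    proof
      fix a obtain z where "a = \<phi> z" using phi_inv by metis
      thus "\<Phi> h (a,a,a) = 0" using diag[OF h] z by simp
    qed
  qed
  thus ?thesis using h PhiI3[OF h] by (simp only: J3_1_iff simp_thms)
qed

lemma E_I3: "\<Phi> (e3 z z z) \<in> I3" by (rule PhiI3, rule e3_in_I3) auto

lemma annihL:
  assumes K: "K \<in> J3 1" and c: "cov a b" and z: "\<phi> z = a" and m: "mult3 (\<Phi> (e3 z z z)) K = (\<lambda>t. 0)"
  shows "K (a,a,b) = 0"
  by (rule CovL[OF c, of K "\<Phi> (e3 z z z)"]) (use K J3_1_iff m E_diag z in auto)

lemma annihR:
  assumes K: "K \<in> J3 1" and c: "cov a b" and z: "\<phi> z = b" and m: "mult3 K (\<Phi> (e3 z z z)) = (\<lambda>t. 0)"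
  shows "K (a,b,b) = 0"
  by (rule CovR[OF c, of K "\<Phi> (e3 z z z)"]) (use K J3_1_iff m E_diag z in auto)

lemma basis_mid:
  assumes "a < b" "b < c"
  shows "\<Phi> (e3 a b c) \<in> J3 2"
proof -
  have e: "e3 a b c \<in> I3" using assms by (intro e3_in_I3) auto
  have "a \<noteq> c" using assms by auto
  hence "e3 a b c \<in> J3 1" unfolding J3_1_iff using e by (auto simp: e3_eq)
  hence K: "\<Phi> (e3 a b c) \<in> J3 1" using J1[OF e] by simp
  have ez: "\<And>z. e3 z z z \<in> I3" by (rule e3_in_I3) auto
  have L: "\<And>z. mult3 (\<Phi> (e3 z z z)) (\<Phi> (e3 a b c)) = (\<lambda>t. 0)"
    using mul[OF ez e] assms zero by (auto simp: e_mid_left)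
  have R: "\<And>z. mult3 (\<Phi> (e3 a b c)) (\<Phi> (e3 z z z)) = (\<lambda>t. 0)"
    using mul[OF e ez] assms zero by (auto simp: e_mid_right)
  { fix a' b' :: 'q assume c: "cov a' b'"
    obtain z where z: "\<phi> z = a'" using phi_inv by metis
    obtain w where w: "\<phi> w = b'" using phi_inv by metis
    have "\<Phi> (e3 a b c) (a',a',b') = 0" by (rule annihL[OF K c z L])
    moreover have "\<Phi> (e3 a b c) (a',b',b') = 0" by (rule annihR[OF K c w R])
    ultimately have "\<Phi> (e3 a b c) (a',a',b') = 0 \<and> \<Phi> (e3 a b c) (a',b',b') = 0" by simp }
  thus ?thesis using K unfolding J3_1_iff J3_2_iff by blast
qed

lemma basis:
  assumes "a \<le> b" "b \<le> c" "2 \<le> len a c"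
  shows "\<Phi> (e3 a b c) \<in> J3 2"
proof -
  obtain z where z: "a < z" "z < c" using len_between[OF assms(3)] by auto
  have ez: "\<And>z. e3 z z z \<in> I3" by (rule e3_in_I3) auto
  have I: "\<And>a b c. a \<le> b \<Longrightarrow> b \<le> c \<Longrightarrow> e3 a b c \<in> I3" by (rule e3_in_I3)
  show ?thesis
  proof (cases "a = b")
    case True
    have m2: "\<Phi> (mult3 (e3 a a z) (e3 a z c)) = mult3 (\<Phi> (e3 a a z)) (\<Phi> (e3 a z c))"
      by (rule mul; rule I) (use z in \<open>auto simp: order.strict_implies_order\<close>)
    have "\<Phi> (e3 a a c) = \<Phi> (mult3 (e3 a a a) (mult3 (e3 a a z) (e3 a z c)))" by (simp add: e_aac[OF z])
    also have "\<dots> = mult3 (\<Phi> (e3 a a a)) (\<Phi> (mult3 (e3 a a z) (e3 a z c)))" by (rule mul[OF ez mult3_in_I3])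
    finally have "\<Phi> (e3 a a c) = mult3 (\<Phi> (e3 a a a)) (mult3 (\<Phi> (e3 a a z)) (\<Phi> (e3 a z c)))" unfolding m2 .
    moreover have "\<Phi> (e3 a z c) \<in> J3 2" by (rule basis_mid[OF z])
    ultimately show ?thesis using True J3_ideal_left J3_ideal_right by metis
  next
    case False
    show ?thesis
    proof (cases "b = c")
      case True
      have m2: "\<Phi> (mult3 (e3 a z c) (e3 z c c)) = mult3 (\<Phi> (e3 a z c)) (\<Phi> (e3 z c c))"
        by (rule mul; rule I) (use z in \<open>auto simp: order.strict_implies_order\<close>)
      have "\<Phi> (e3 a c c) = \<Phi> (mult3 (mult3 (e3 a z c) (e3 z c c)) (e3 c c c))" by (simp add: e_acc[OF z])
      also have "\<dots> = mult3 (\<Phi> (mult3 (e3 a z c) (e3 z c c))) (\<Phi> (e3 c c c))" by (rule mul[OF mult3_in_I3 ez])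
      finally have "\<Phi> (e3 a c c) = mult3 (mult3 (\<Phi> (e3 a z c)) (\<Phi> (e3 z c c))) (\<Phi> (e3 c c c))" unfolding m2 .
      moreover have "\<Phi> (e3 a z c) \<in> J3 2" by (rule basis_mid[OF z])
      ultimately show ?thesis using True J3_ideal_left J3_ideal_right by metis
    next
      case False
      thus ?thesis using \<open>a \<noteq> b\<close> assms basis_mid by (simp add: order.strict_iff_order)
    qed
  qed
qed

lemma J2_pres_aux:
  assumes "finite S"
  shows "\<forall>h. h \<in> J3 2 \<and> {t. h t \<noteq> 0} \<subseteq> S \<longrightarrow> \<Phi> h \<in> J3 2"
  using assms
proof (induction S rule: finite_induct)
  case empty
  { fix h :: "'p \<times> 'p \<times> 'p \<Rightarrow> 'r" assume "{t. h t \<noteq> 0} \<subseteq> {}"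
    hence "h = (\<lambda>t. 0)" by auto
    hence "\<Phi> h \<in> J3 2" using zero J3_zero by simp }
  thus ?case by blast
next
  case (insert t S)
  show ?case
  proof (intro allI impI)
    fix h :: "'p \<times> 'p \<times> 'p \<Rightarrow> 'r" assume h: "h \<in> J3 2 \<and> {t. h t \<noteq> 0} \<subseteq> insert t S"
    obtain t1 t2 t3 where t: "t = (t1,t2,t3)" by (cases t)
    define h' where "h' = (\<lambda>s. if s = t then 0 else h s)"
    have h'J: "h' \<in> J3 2" using h unfolding h'_def J3_def I3_def by auto
    have h'S: "{t. h' t \<noteq> 0} \<subseteq> S" using h unfolding h'_def by auto
    have Ph': "\<Phi> h' \<in> J3 2" using insert.IH h'J h'S by blast
    have h'I: "h' \<in> I3" using h'J unfolding J3_def by auto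
    show "\<Phi> h \<in> J3 2"
    proof (cases "h t = 0")
      case True
      hence "h = h'" unfolding h'_def by auto
      thus ?thesis using Ph' by simp
    next
      case False
      have hJ: "h \<in> J3 2" using h by simp
      have le: "t1 \<le> t2" "t2 \<le> t3" using False hJ t unfolding J3_def I3_def by auto
      have "\<not> len t1 t3 < 2" using False hJ t le unfolding J3_def by auto
      hence l: "2 \<le> len t1 t3" by simp
      have eI: "e3 t1 t2 t3 \<in> I3" using le by (rule e3_in_I3)
      have "h = (\<lambda>s. h' s + h t * e3 t1 t2 t3 s)"
        unfolding h'_def t by (auto simp: e3_def)
      hence "\<Phi> h = \<Phi> (\<lambda>s. h' s + h t * e3 t1 t2 t3 s)" by simp
      also have "\<dots> = (\<lambda>s. \<Phi> h' s + \<Phi> (\<lambda>s. h t * e3 t1 t2 t3 s) s)"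
        by (rule add[OF h'I I3_smul[OF eI]])
      also have "\<dots> = (\<lambda>s. \<Phi> h' s + h t * \<Phi> (e3 t1 t2 t3) s)"
        using smul[OF eI] by simp
      finally show ?thesis
        using J3_add[OF Ph' J3_smul[OF basis[OF le l]]] by simp
    qed
  qed
qed

lemma J2_pres: "h \<in> J3 2 \<Longrightarrow> \<Phi> h \<in> J3 2"
  using J2_pres_aux[of UNIV] by auto

end



lemma iso3_inv:
  fixes \<Phi> :: "('p::{order,finite} \<times> 'p \<times> 'p \<Rightarrow> 'r::comm_ring_1) \<Rightarrow> ('q::{order,finite} \<times> 'q \<times> 'q \<Rightarrow> 'r)"
    and \<phi> :: "'p \<Rightarrow> 'q"
  assumes "iso3 \<Phi> \<phi>"
  shows "iso3 (inv_into I3 \<Phi>) (inv \<phi>)"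
proof -
  interpret iso3 \<Phi> \<phi> by fact
  let ?\<Psi> = "inv_into I3 \<Phi>"
  have bb: "bij_betw \<Phi> I3 I3" using iso unfolding alg_iso3_def by blast
  have inj: "inj_on \<Phi> I3" and im: "\<Phi> ` I3 = I3" using bb unfolding bij_betw_def by auto
  have PsiI: "\<And>F. F \<in> I3 \<Longrightarrow> ?\<Psi> F \<in> I3" using im inv_into_into[of _ \<Phi> I3] by blast
  have PhiPsi: "\<And>F. F \<in> I3 \<Longrightarrow> \<Phi> (?\<Psi> F) = F" using im f_inv_into_f[of _ \<Phi> I3] by blast
  have PsiPhi: "\<And>f. f \<in> I3 \<Longrightarrow> ?\<Psi> (\<Phi> f) = f" using inj inv_into_f_f by metis
  have addP: "\<forall>F\<in>I3. \<forall>G\<in>I3. ?\<Psi> (\<lambda>t. F t + G t) = (\<lambda>t. ?\<Psi> F t + ?\<Psi> G t)"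
  proof (intro ballI)
    fix F G :: "'q \<times> 'q \<times> 'q \<Rightarrow> 'r" assume F: "F \<in> I3" and G: "G \<in> I3"
    have "\<Phi> (\<lambda>t. ?\<Psi> F t + ?\<Psi> G t) = (\<lambda>t. F t + G t)"
      using add[OF PsiI[OF F] PsiI[OF G]] PhiPsi[OF F] PhiPsi[OF G] by simp
    hence "?\<Psi> (\<lambda>t. F t + G t) = ?\<Psi> (\<Phi> (\<lambda>t. ?\<Psi> F t + ?\<Psi> G t))" by simp
    also have "\<dots> = (\<lambda>t. ?\<Psi> F t + ?\<Psi> G t)" by (rule PsiPhi[OF I3_add[OF PsiI[OF F] PsiI[OF G]]])
    finally show "?\<Psi> (\<lambda>t. F t + G t) = (\<lambda>t. ?\<Psi> F t + ?\<Psi> G t)" .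
  qed
  have smulP: "\<forall>F\<in>I3. \<forall>c. ?\<Psi> (\<lambda>t. c * F t) = (\<lambda>t. c * ?\<Psi> F t)"
  proof (intro ballI allI)
    fix F :: "'q \<times> 'q \<times> 'q \<Rightarrow> 'r" and c assume F: "F \<in> I3"
    have "\<Phi> (\<lambda>t. c * ?\<Psi> F t) = (\<lambda>t. c * F t)"
      using smul[OF PsiI[OF F]] PhiPsi[OF F] by simp
    hence "?\<Psi> (\<lambda>t. c * F t) = ?\<Psi> (\<Phi> (\<lambda>t. c * ?\<Psi> F t))" by simp
    also have "\<dots> = (\<lambda>t. c * ?\<Psi> F t)" by (rule PsiPhi[OF I3_smul[OF PsiI[OF F]]])
    finally show "?\<Psi> (\<lambda>t. c * F t) = (\<lambda>t. c * ?\<Psi> F t)" .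
  qed
  have mulP: "\<forall>F\<in>I3. \<forall>G\<in>I3. ?\<Psi> (mult3 F G) = mult3 (?\<Psi> F) (?\<Psi> G)"
  proof (intro ballI)
    fix F G :: "'q \<times> 'q \<times> 'q \<Rightarrow> 'r" assume F: "F \<in> I3" and G: "G \<in> I3"
    have "\<Phi> (mult3 (?\<Psi> F) (?\<Psi> G)) = mult3 F G"
      using mul[OF PsiI[OF F] PsiI[OF G]] PhiPsi[OF F] PhiPsi[OF G] by simp
    hence "?\<Psi> (mult3 F G) = ?\<Psi> (\<Phi> (mult3 (?\<Psi> F) (?\<Psi> G)))" by simp
    also have "\<dots> = mult3 (?\<Psi> F) (?\<Psi> G)" by (rule PsiPhi[OF mult3_in_I3])
    finally show "?\<Psi> (mult3 F G) = mult3 (?\<Psi> F) (?\<Psi> G)" .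
  qed
  have bbP: "bij_betw ?\<Psi> I3 I3" using bb bij_betw_inv_into by blast
  have isoP: "alg_iso3 ?\<Psi>" unfolding alg_iso3_def using bbP addP smulP mulP by blast
  have bijP: "bij (inv \<phi>)" using bij by (rule bij_imp_bij_inv)
  have HP: "\<forall>c. (\<lambda>t. ?\<Psi> (e3 c c c) t - e3 (inv \<phi> c) (inv \<phi> c) (inv \<phi> c) t) \<in> J3 1"
  proof
    fix c :: 'q
    define z where "z = inv \<phi> c"
    have zc: "\<phi> z = c" unfolding z_def by (rule phi_inv)
    have ec: "e3 c c c \<in> I3" by (rule e3_in_I3) auto
    have ez: "e3 z z z \<in> I3" by (rule e3_in_I3) auto
    have hI: "(\<lambda>t. ?\<Psi> (e3 c c c) t - e3 z z z t) \<in> I3" by (rule I3_diff[OF PsiI[OF ec] ez])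
    have "\<Phi> (\<lambda>t. ?\<Psi> (e3 c c c) t - e3 z z z t) = (\<lambda>t. e3 c c c t - \<Phi> (e3 z z z) t)"
      using diff[OF PsiI[OF ec] ez] PhiPsi[OF ec] by simp
    moreover have "(\<lambda>t. e3 c c c t - \<Phi> (e3 z z z) t) \<in> J3 1"
      unfolding J3_1_iff using I3_diff[OF ec E_I3[of z]] E_diag zc by (auto simp: e3_eq)
    ultimately have "\<Phi> (\<lambda>t. ?\<Psi> (e3 c c c) t - e3 z z z t) \<in> J3 1" by simp
    hence "(\<lambda>t. ?\<Psi> (e3 c c c) t - e3 z z z t) \<in> J3 1" using J1[OF hI] by simp
    thus "(\<lambda>t. ?\<Psi> (e3 c c c) t - e3 (inv \<phi> c) (inv \<phi> c) (inv \<phi> c) t) \<in> J3 1" unfolding z_def .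
  qed
  show ?thesis by unfold_locales (fact isoP bijP HP)+
qed



lemma pf1: "cov x y \<Longrightarrow> mult3 (e3 x x y) (e3 x y y) = (\<lambda>t. e3 x x y t + e3 x y y t :: 'r::comm_ring_1)"
  for x y :: "'p::{order,finite}"
proof (rule fun3_eqI)
  fix x1 x2 x3 assume c: "cov x y"
  have b: "\<forall>t. x \<le> t \<and> t \<le> y \<longrightarrow> t = x \<or> t = y" and l: "x < y" using c unfolding cov_def by auto
  show "mult3 (e3 x x y) (e3 x y y) (x1,x2,x3) = (\<lambda>t. e3 x x y t + e3 x y y t :: 'r) (x1,x2,x3)"
    using b l by (auto simp: m3simps order.strict_iff_order)
qed

lemma pf2: "x < y \<Longrightarrow> mult3 (e3 x x x) (\<lambda>t. e3 x x y t + e3 x y y t) = (e3 x x y :: _ \<Rightarrow> 'r::comm_ring_1)"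
  for x y :: "'p::{order,finite}"
  by (rule fun3_eqI) (auto simp: m3simps)
lemma pf3: "x < y \<Longrightarrow> mult3 (\<lambda>t. e3 x x y t + e3 x y y t) (e3 y y y) = (e3 x y y :: _ \<Rightarrow> 'r::comm_ring_1)"
  for x y :: "'p::{order,finite}"
  by (rule fun3_eqI) (auto simp: m3simps)
lemma pf4: "x < y \<Longrightarrow> z \<noteq> x \<Longrightarrow> mult3 (e3 z z z) (\<lambda>t. e3 x x y t + e3 x y y t) = (\<lambda>t. 0 :: 'r::comm_ring_1)"
  for x y z :: "'p::{order,finite}"
  by (rule fun3_eqI) (auto simp: m3simps)
lemma pf5: "x < y \<Longrightarrow> z \<noteq> y \<Longrightarrow> mult3 (\<lambda>t. e3 x x y t + e3 x y y t) (e3 z z z) = (\<lambda>t. 0 :: 'r::comm_ring_1)"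
  for x y z :: "'p::{order,finite}"
  by (rule fun3_eqI) (auto simp: m3simps)

lemma ring_aux:
  fixes g L R Lv Al Bl Br :: "'r::comm_ring_1"
  assumes "Lv = 0 * Lv + Lv * R" "R = Lv * R + R * 1" "0 = 1 * Lv + L * R"
    "Al = 1 * g + L * g" "Bl = 0 * Lv + g * R" "Br = g * R + g * 1"
    "g = Al + Bl" "g = 0 * Bl + Al * Br"
  shows "g * g = g"
proof -
  from assms(2) have "Lv * R + R = 0 + R" by simp
  hence a: "Lv * R = 0" by (rule add_right_imp_eq)
  have b: "Lv = 0" using assms(1) a by simp
  have c: "L * R = 0" using assms(3) b by simp
  have "g + (g * L + g * R) = g + 0" using assms(7,4,5) b by (simp add: algebra_simps)
  hence d: "g * L + g * R = 0" by (rule add_left_imp_eq)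
  have "g = g * g + g * (g * L + g * R) + g * g * (L * R)"
    using assms(8,4,6) by (simp add: algebra_simps)
  thus ?thesis using c d by simp
qed



context iso3 begin

lemma main:
  assumes ind: "indecomposable_ring TYPE('r)"
    and xy: "x < y" and lxy: "len x y = 1"
  shows "\<phi> x < \<phi> y \<and>
    (\<exists>\<sigma>\<in>J3 2. \<Phi> (\<lambda>t. e3 x x y t + e3 x y y t)
        = (\<lambda>t. e3 (\<phi> x) (\<phi> x) (\<phi> y) t + e3 (\<phi> x) (\<phi> y) (\<phi> y) t + \<sigma> t))"
proof -
  define u where "u = \<phi> x"
  define v where "v = \<phi> y"
  define f where "f = (\<lambda>t. e3 x x y t + e3 x y y t :: 'r)"
  have cxy: "cov x y" by (rule len1_cov[OF xy lxy])
  have xney: "x \<noteq> y" using xy by auto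
  have uv: "u \<noteq> v" unfolding u_def v_def using xney bij by (metis bij_pointE)
  have le: "x \<le> y" using xy by auto
  have exxy: "e3 x x y \<in> I3" and exyy: "e3 x y y \<in> I3" using le by (auto intro: e3_in_I3)
  have ez: "\<And>z. e3 z z z \<in> I3" by (rule e3_in_I3) auto
  have fI: "f \<in> I3" unfolding f_def by (rule I3_add[OF exxy exyy])
  define g where "g = \<Phi> f"
  define A where "A = \<Phi> (e3 x x y)"
  define B where "B = \<Phi> (e3 x y y)"
  define Ex where "Ex = \<Phi> (e3 x x x)"
  define Ey where "Ey = \<Phi> (e3 y y y)"
  have fJ: "f \<in> J3 1" unfolding J3_1_iff f_def using fI[unfolded f_def] xney by (auto simp: e3_eq)
  have gJ: "g \<in> J3 1" unfolding g_def using J1[OF fI] fJ by simp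
  have "e3 x x y \<in> J3 1" unfolding J3_1_iff using exxy xney by (auto simp: e3_eq)
  hence AJ: "A \<in> J3 1" unfolding A_def using J1[OF exxy] by simp
  have "e3 x y y \<in> J3 1" unfolding J3_1_iff using exyy xney by (auto simp: e3_eq)
  hence BJ: "B \<in> J3 1" unfolding B_def using J1[OF exyy] by simp
  have gdiag: "\<And>a. g (a,a,a) = 0" using gJ J3_1_iff by blast
  have Adiag: "\<And>a. A (a,a,a) = 0" using AJ J3_1_iff by blast
  have Bdiag: "\<And>a. B (a,a,a) = 0" using BJ J3_1_iff by blast
  have gI: "g \<in> I3" using gJ J3_1_iff by blast
  have gAB: "g = mult3 A B" unfolding g_def A_def B_def f_def
    using mul[OF exxy exyy] by (simp add: pf1[OF cxy])
  have gA: "A = mult3 Ex g" unfolding g_def A_def Ex_def f_def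
    using mul[OF ez[of x] fI[unfolded f_def]] by (simp add: pf2[OF xy])
  have gB: "B = mult3 g Ey" unfolding g_def B_def Ey_def f_def
    using mul[OF fI[unfolded f_def] ez[of y]] by (simp add: pf3[OF xy])
  have gsum: "g = (\<lambda>t. A t + B t)" unfolding g_def A_def B_def f_def by (rule add[OF exxy exyy])
  have LR: "\<And>a b. cov a b \<Longrightarrow> g (a,a,b) = g (a,b,b)"
  proof -
    fix a b :: 'q assume c: "cov a b"
    show "g (a,a,b) = g (a,b,b)" unfolding gAB cov_l[OF c] cov_r[OF c] by (simp add: Adiag Bdiag)
  qed
  have cu: "\<And>a b. cov a b \<Longrightarrow> a \<noteq> u \<Longrightarrow> g (a,a,b) = 0"
  proof -
    fix a b :: 'q assume c: "cov a b" and au: "a \<noteq> u"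
    define z where "z = inv \<phi> a"
    have za: "\<phi> z = a" unfolding z_def by (rule phi_inv)
    hence "z \<noteq> x" using au u_def by auto
    hence "mult3 (\<Phi> (e3 z z z)) g = (\<lambda>t. 0)"
      unfolding g_def f_def using mul[OF ez[of z] fI[unfolded f_def]] zero by (simp add: pf4[OF xy])
    thus "g (a,a,b) = 0" by (rule annihL[OF gJ c za])
  qed
  have cv: "\<And>a b. cov a b \<Longrightarrow> b \<noteq> v \<Longrightarrow> g (a,b,b) = 0"
  proof -
    fix a b :: 'q assume c: "cov a b" and bv: "b \<noteq> v"
    define z where "z = inv \<phi> b"
    have zb: "\<phi> z = b" unfolding z_def by (rule phi_inv)
    hence "z \<noteq> y" using bv v_def by auto
    hence "mult3 g (\<Phi> (e3 z z z)) = (\<lambda>t. 0)"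
      unfolding g_def f_def using mul[OF fI[unfolded f_def] ez[of z]] zero by (simp add: pf5[OF xy])
    thus "g (a,b,b) = 0" by (rule annihR[OF gJ c zb])
  qed
  have other: "\<And>a b. cov a b \<Longrightarrow> (a,b) \<noteq> (u,v) \<Longrightarrow> g (a,a,b) = 0 \<and> g (a,b,b) = 0"
    using cu cv LR by (metis prod.inject)
  \<comment> \<open>g is not in J3 2, using the inverse isomorphism\<close>
  have notJ2: "g \<notin> J3 2"
  proof
    assume gJ2: "g \<in> J3 2"
    interpret inv: iso3 "inv_into I3 \<Phi>" "inv \<phi>" by (rule iso3_inv) unfold_locales
    have "inv_into I3 \<Phi> g \<in> J3 2" by (rule inv.J2_pres[OF gJ2])
    moreover have "inv_into I3 \<Phi> g = f"
    proof -
      have "inj_on \<Phi> I3" using iso unfolding alg_iso3_def bij_betw_def by blast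
      thus ?thesis unfolding g_def using fI by (simp add: inv_into_f_f)
    qed
    ultimately have "f \<in> J3 2" by simp
    hence "f (x,x,y) = 0" using cxy J3_2_iff by blast
    thus False unfolding f_def using xney by (simp add: e3_eq)
  qed
  obtain a b where ab: "cov a b" "\<not> (g (a,a,b) = 0 \<and> g (a,b,b) = 0)"
    using notJ2 gI gdiag unfolding J3_2_iff by blast
  have abuv: "a = u" "b = v" using other[OF ab(1)] ab(2) by auto
  have cuv: "cov u v" using ab(1) abuv by simp
  define \<gamma> where "\<gamma> = g (u,u,v)"
  have gr: "g (u,v,v) = \<gamma>" unfolding \<gamma>_def using LR[OF cuv] by simp
  have gne: "\<gamma> \<noteq> 0" using ab(2) abuv gr \<gamma>_def by auto
  have Exu: "Ex (u,u,u) = 1" unfolding Ex_def u_def by (simp add: E_diag)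
  have Eyu: "Ey (u,u,u) = 0" unfolding Ey_def using uv v_def by (simp add: E_diag)
  have Eyv: "Ey (v,v,v) = 1" unfolding Ey_def v_def by (simp add: E_diag)
  have EyEy: "mult3 Ey Ey = Ey" unfolding Ey_def using mul[OF ez[of y] ez[of y]] by (simp add: ee_same)
  have ExEy: "mult3 Ex Ey = (\<lambda>t. 0)" unfolding Ex_def Ey_def using mul[OF ez[of x] ez[of y]] zero by (simp add: ee_diff[OF xney])
  have "\<gamma> * \<gamma> = \<gamma>"
  proof (rule ring_aux)
    show "Ey (u,u,v) = 0 * Ey (u,u,v) + Ey (u,u,v) * Ey (u,v,v)"
      using cov_l[OF cuv, of Ey Ey] EyEy Eyu by simp
    show "Ey (u,v,v) = Ey (u,u,v) * Ey (u,v,v) + Ey (u,v,v) * 1"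
      using cov_r[OF cuv, of Ey Ey] EyEy Eyv by simp
    show "0 = 1 * Ey (u,u,v) + Ex (u,u,v) * Ey (u,v,v)"
      using cov_l[OF cuv, of Ex Ey] ExEy Exu by (metis)
    show "A (u,u,v) = 1 * \<gamma> + Ex (u,u,v) * \<gamma>"
      using cov_l[OF cuv, of Ex g] gA Exu gr \<gamma>_def by simp
    show "B (u,u,v) = 0 * Ey (u,u,v) + \<gamma> * Ey (u,v,v)"
      using cov_l[OF cuv, of g Ey] gB gdiag \<gamma>_def by simp
    show "B (u,v,v) = \<gamma> * Ey (u,v,v) + \<gamma> * 1"
      using cov_r[OF cuv, of g Ey] gB Eyv gr \<gamma>_def by simp
    show "\<gamma> = A (u,u,v) + B (u,u,v)"
      using gsum \<gamma>_def by (metis)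
    show "\<gamma> = 0 * B (u,u,v) + A (u,u,v) * B (u,v,v)"
      using cov_l[OF cuv, of A B] gAB Adiag \<gamma>_def by simp
  qed
  hence g1: "\<gamma> = 1" using ind gne unfolding indecomposable_ring_def by blast
  define \<sigma> where "\<sigma> = (\<lambda>t. g t - (e3 u u v t + e3 u v v t))"
  have luv: "u \<le> v" using cuv unfolding cov_def by auto
  have s1: "\<sigma> \<in> I3" unfolding \<sigma>_def using luv
    by (intro I3_diff[OF gI] I3_add e3_in_I3) auto
  have s2: "\<forall>a. \<sigma> (a,a,a) = 0" unfolding \<sigma>_def using gdiag uv by (auto simp: e3_eq)
  have s3: "\<forall>a b. cov a b \<longrightarrow> \<sigma> (a,a,b) = 0 \<and> \<sigma> (a,b,b) = 0"
  proof (intro allI impI)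
    fix a b :: 'q assume c: "cov a b"
    have anb: "a \<noteq> b" using c unfolding cov_def by auto
    show "\<sigma> (a,a,b) = 0 \<and> \<sigma> (a,b,b) = 0"
    proof (cases "(a,b) = (u,v)")
      case True
      thus ?thesis unfolding \<sigma>_def using g1 gr \<gamma>_def uv by (auto simp: e3_eq)
    next
      case False
      thus ?thesis unfolding \<sigma>_def using other[OF c False] anb by (auto simp: e3_eq)
    qed
  qed
  have \<sigma>J: "\<sigma> \<in> J3 2" unfolding J3_2_iff using s1 s2 s3 by blast
  have "\<Phi> (\<lambda>t. e3 x x y t + e3 x y y t) = (\<lambda>t. e3 u u v t + e3 u v v t + \<sigma> t)"
    unfolding \<sigma>_def g_def[symmetric, unfolded f_def] f_def[symmetric] g_def[symmetric] by simp
  moreover have "u < v" using cuv unfolding cov_def by auto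
  ultimately show ?thesis using \<sigma>J unfolding u_def v_def by blast
qed

end

theorem lemma3p4:
  fixes \<Phi> :: "('p::{order,finite} \<times> 'p \<times> 'p \<Rightarrow> 'r::comm_ring_1) \<Rightarrow> ('q::{order,finite} \<times> 'q \<times> 'q \<Rightarrow> 'r)"
    and \<phi> :: "'p \<Rightarrow> 'q"
  assumes "indecomposable_ring TYPE('r)"
    and "alg_iso3 \<Phi>"
    and "bij \<phi>"
    and "\<forall>x. (\<lambda>t. \<Phi> (e3 x x x) t - e3 (\<phi> x) (\<phi> x) (\<phi> x) t) \<in> J3 1"
    and "x < y" and "len x y = 1"
  shows "\<phi> x < \<phi> y \<and>
    (\<exists>\<sigma>\<in>J3 2. \<Phi> (\<lambda>t. e3 x x y t + e3 x y y t)
        = (\<lambda>t. e3 (\<phi> x) (\<phi> x) (\<phi> y) t + e3 (\<phi> x) (\<phi> y) (\<phi> y) t + \<sigma> t))"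
proof -
  interpret iso3 \<Phi> \<phi> using assms(2,3,4) by unfold_locales
  show ?thesis by (rule main[OF assms(1,5,6)])
qed


end
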